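(* Let ${\tt G}$ be a digraph with a fixed total order on its vertices, $R$ a commutative unital ring, $A$ a unital associative $R$-algebra and $M$ an $(A,A)$-bimodule. Setting $\mathcal F_{A,M}({\tt H}\preceq{\tt H}')$ to be the composite of the covering maps along any chain ${\tt H}={\tt H}_0\prec{\tt H}_1\prec\dots\prec{\tt H}_m={\tt H}'$ (and the identity when ${\tt H}={\tt H}'$) is well defined, and $\mathcal F_{A,M}\colon\mathbf P({\tt G})\to R\text{-}\mathbf{Mod}$ is a covariant functor.
   Context: A digraph ${\tt G}=(V,E)$ has finite $V$ and $E\subseteq(V\times V)\setminus\{(v,v)\}$; $s(e),t(e)$ are source and target of $e$. A multipath is a spanning subgraph (all vertices, subset of edges) each of whose components (of the underlying undirected graph) is an isolated vertex or a simple directed path. $P({\tt G})$ is the set of multipaths ordered by inclusion of edge sets, ${\tt H}\prec{\tt H}\cup e$ the covering relation (add one edge), and $\mathbf P({\tt G})$ the category with a unique morphism ${\tt H}\to{\tt H}'$ iff ${\tt H}\le{\tt H}'$. For a multipath ${\tt H}$ with components $c_0<\dots<c_k$ ordered by minimal vertex, $\mathcal F_{A,M}({\tt H})=M\otimes_R A\otimes_R\cdots\otimes_R A$ (factor $M$ for $c_0$, factor $A$ for $c_1,\dots,c_k$). For ${\tt H}\prec{\tt H}\cup e$ let $s,t$ be the indices of the components of ${\tt H}$ containing $s(e),t(e)$ (so $s\neq t$); the components of ${\tt H}\cup e$ are those of ${\tt H}$ with $c_s,c_t$ merged into one component placed at position $\min(s,t)$, the others keeping their order, and the covering map $\mathcal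 F_{A,M}({\tt H}\prec{\tt H}\cup e)$ sends $a_0\otimes\cdots\otimes a_k$ to the tensor obtained by replacing $a_s,a_t$ with the single factor $a_s\cdot a_t$ (algebra product or bimodule action) in position $\min(s,t)$. *)

theory Defs
  imports Main
begin

definition RA_bimodule ::
  "('r::comm_ring_1 \<Rightarrow> 'a::ring_1 \<Rightarrow> 'a) \<Rightarrow> ('r \<Rightarrow> 'm::ab_group_add \<Rightarrow> 'm)
   \<Rightarrow> ('a \<Rightarrow> 'm \<Rightarrow> 'm) \<Rightarrow> ('m \<Rightarrow> 'a \<Rightarrow> 'm) \<Rightarrow> bool" where
  "RA_bimodule sA sM lact ract \<longleftrightarrow>
     \<comment> \<open>A is an R-module\<close>
     (\<forall>r s a. sA (r + s) a = sA r a + sA s a) \<and>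
     (\<forall>r a b. sA r (a + b) = sA r a + sA r b) \<and>
     (\<forall>r s a. sA (r * s) a = sA r (sA s a)) \<and>
     (\<forall>a. sA 1 a = a) \<and>
     \<comment> \<open>A is an R-algebra\<close>
     (\<forall>r a b. sA r (a * b) = sA r a * b) \<and>
     (\<forall>r a b. sA r (a * b) = a * sA r b) \<and>
     \<comment> \<open>M is an R-module\<close>
     (\<forall>r s m. sM (r + s) m = sM r m + sM s m) \<and>
     (\<forall>r m n. sM r (m + n) = sM r m + sM r n) \<and>
     (\<forall>r s m. sM (r * s) m = sM r (sM s m)) \<and>
     (\<forall>m. sM 1 m = m) \<and>
     \<comment> \<open>M is a left A-module\<close>
     (\<forall>a b m. lact (a + b) m = lact a m + lact b m) \<and>
     (\<forall>a m n. lact a (m + n) = lact a m + lact a n) \<and>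
     (\<forall>a b m. lact (a * b) m = lact a (lact b m)) \<and>
     (\<forall>m. lact 1 m = m) \<and>
     \<comment> \<open>M is a right A-module\<close>
     (\<forall>a b m. ract m (a + b) = ract m a + ract m b) \<and>
     (\<forall>a m n. ract (m + n) a = ract m a + ract n a) \<and>
     (\<forall>a b m. ract m (a * b) = ract (ract m a) b) \<and>
     (\<forall>m. ract m 1 = m) \<and>
     \<comment> \<open>bimodule compatibility\<close>
     (\<forall>a b m. ract (lact a m) b = lact a (ract m b)) \<and>
     \<comment> \<open>compatibility of the actions with the R-structure\<close>
     (\<forall>r a m. lact (sA r a) m = sM r (lact a m)) \<and>
     (\<forall>r a m. lact a (sM r m) = sM r (lact a m)) \<and>
     (\<forall>r a m. ract m (sA r a) = sM r (ract m a)) \<and>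
     (\<forall>r a m. ract (sM r m) a = sM r (ract m a))"

text \<open>A digraph is a finite vertex set V (of a linearly ordered type, giving the fixed
  total order on vertices) and E \<subseteq> (V \<times> V) minus the diagonal. A spanning subgraph is
  given by its edge set H \<subseteq> E.\<close>

definition digraph :: "'v set \<Rightarrow> ('v \<times> 'v) set \<Rightarrow> bool" where
  "digraph V E \<longleftrightarrow> finite V \<and> E \<subseteq> V \<times> V \<and> (\<forall>v. (v, v) \<notin> E)"

definition ucomp :: "'v set \<Rightarrow> ('v \<times> 'v) set \<Rightarrow> 'v \<Rightarrow> 'v set" where
  "ucomp V H v = {w \<in> V. (v, w) \<in> (H \<union> H\<inverse>)\<^sup>*}"

definition comps :: "'v set \<Rightarrow> ('v \<times> 'v) set \<Rightarrow> 'v set set" where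
  "comps V H = ucomp V H ` V"

definition is_simple_dipath :: "'v set \<Rightarrow> ('v \<times> 'v) set \<Rightarrow> bool" where
  "is_simple_dipath C H \<longleftrightarrow>
     (\<exists>vs. distinct vs \<and> set vs = C \<and>
        {e \<in> H. fst e \<in> C \<or> snd e \<in> C} = {(vs ! i, vs ! Suc i) | i. Suc i < length vs})"

definition multipath :: "'v set \<Rightarrow> ('v \<times> 'v) set \<Rightarrow> ('v \<times> 'v) set \<Rightarrow> bool" where
  "multipath V E H \<longleftrightarrow> H \<subseteq> E \<and> (\<forall>C \<in> comps V H. is_simple_dipath C H)"

definition covers :: "'v set \<Rightarrow> ('v \<times> 'v) set \<Rightarrow> ('v \<times> 'v) set \<Rightarrow> ('v \<times> 'v) \<Rightarrow> bool" where
  "covers V E H e \<longleftrightarrow> multipath V E H \<and> multipath V E (insert e H) \<and> e \<notin> H"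

definition comp_idx :: "'v::linorder set \<Rightarrow> ('v \<times> 'v) set \<Rightarrow> 'v \<Rightarrow> nat" where
  "comp_idx V H x = card {C \<in> comps V H. Min C < Min (ucomp V H x)}"

text \<open>A pure tensor m \<otimes> a_1 \<otimes> ... \<otimes> a_k of F(H) = M \<otimes> A^{\<otimes> k} is represented by the pair
  (m, [a_1,...,a_k]). Since pure tensors generate the tensor product and all maps involved
  are R-linear, maps out of F(H) are determined by their values on pure tensors.\<close>

definition pure_tensors :: "'v set \<Rightarrow> ('v \<times> 'v) set \<Rightarrow> ('m \<times> 'a list) set" where
  "pure_tensors V H = {(m, as). Suc (length as) = card (comps V H)}"

definition del_nth :: "nat \<Rightarrow> 'x list \<Rightarrow> 'x list" where
  "del_nth i xs = take i xs @ drop (Suc i) xs"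

text \<open>Merging the factors in positions s and t (positions counted with the M factor at
  position 0): the factors are replaced by a_s \<cdot> a_t in position min s t.\<close>
definition merge_factors ::
  "('a::ring_1 \<Rightarrow> 'm \<Rightarrow> 'm) \<Rightarrow> ('m \<Rightarrow> 'a \<Rightarrow> 'm) \<Rightarrow> nat \<Rightarrow> nat \<Rightarrow> 'm \<times> 'a list \<Rightarrow> 'm \<times> 'a list" where
  "merge_factors lact ract s t x =
     (case x of (m, as) \<Rightarrow>
       if s = 0 then (ract m (as ! (t - 1)), del_nth (t - 1) as)
       else if t = 0 then (lact (as ! (s - 1)) m, del_nth (s - 1) as)
       else (m, del_nth (max s t - 1) (as[min s t - 1 := as ! (s - 1) * as ! (t - 1)])))"

definition cover_map ::
  "('a::ring_1 \<Rightarrow> 'm \<Rightarrow> 'm) \<Rightarrow> ('m \<Rightarrow> 'a \<Rightarrow> 'm) \<Rightarrow> 'v::linorder set \<Rightarrow> ('v \<times> 'v) set \<Rightarrow> ('v \<times> 'v)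
    \<Rightarrow> 'm \<times> 'a list \<Rightarrow> 'm \<times> 'a list" where
  "cover_map lact ract V H e = merge_factors lact ract (comp_idx V H (fst e)) (comp_idx V H (snd e))"

definition is_chain ::
  "'v set \<Rightarrow> ('v \<times> 'v) set \<Rightarrow> ('v \<times> 'v) set \<Rightarrow> ('v \<times> 'v) set \<Rightarrow> ('v \<times> 'v) list \<Rightarrow> bool" where
  "is_chain V E H H' es \<longleftrightarrow> multipath V E H \<and>
     (\<forall>i < length es. covers V E (H \<union> set (take i es)) (es ! i)) \<and>
     H \<union> set es = H'"

fun chain_map ::
  "('a::ring_1 \<Rightarrow> 'm \<Rightarrow> 'm) \<Rightarrow> ('m \<Rightarrow> 'a \<Rightarrow> 'm) \<Rightarrow> 'v::linorder set \<Rightarrow> ('v \<times> 'v) set \<Rightarrow> ('v \<times> 'v) list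
    \<Rightarrow> 'm \<times> 'a list \<Rightarrow> 'm \<times> 'a list" where
  "chain_map lact ract V H [] x = x"
| "chain_map lact ract V H (e # es) x = chain_map lact ract V (insert e H) es (cover_map lact ract V H e x)"

definition F_mor ::
  "('a::ring_1 \<Rightarrow> 'm \<Rightarrow> 'm) \<Rightarrow> ('m \<Rightarrow> 'a \<Rightarrow> 'm) \<Rightarrow> 'v::linorder set \<Rightarrow> ('v \<times> 'v) set \<Rightarrow> ('v \<times> 'v) set
    \<Rightarrow> ('v \<times> 'v) set \<Rightarrow> 'm \<times> 'a list \<Rightarrow> 'm \<times> 'a list" where
  "F_mor lact ract V E H H' = chain_map lact ract V H (SOME es. is_chain V E H H' es)"

end

theory Submission
  imports Defs
begin

definition cpairs :: "'x list \<Rightarrow> ('x \<times> 'x) set" where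
  "cpairs vs = set (zip vs (tl vs))"

lemma cpairs_idx: "{(vs ! i, vs ! Suc i) | i. Suc i < length vs} = cpairs vs"
  unfolding cpairs_def set_zip by (cases vs) (auto simp: nth_tl)

lemma cpairs_Nil[simp]: "cpairs [] = {}" and cpairs_single[simp]: "cpairs [a] = {}"
  and cpairs_Cons2[simp]: "cpairs (a # b # vs) = insert (a, b) (cpairs (b # vs))"
  by (auto simp: cpairs_def)

lemma cpairs_Cons: "cpairs (a # vs) = (if vs = [] then {} else insert (a, hd vs) (cpairs vs))"
  by (cases vs) auto

lemma cpairs_append: "xs \<noteq> [] \<Longrightarrow> ys \<noteq> [] \<Longrightarrow>
  cpairs (xs @ ys) = cpairs xs \<union> insert (last xs, hd ys) (cpairs ys)"
proof (induction xs)
  case Nil then show ?case by simp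
next
  case (Cons a xs)
  show ?case
  proof (cases "xs = []")
    case True then show ?thesis using Cons.prems by (cases ys) auto
  next
    case False
    then show ?thesis using Cons by (cases xs) auto
  qed
qed

lemma cpairs_subset: "cpairs vs \<subseteq> set vs \<times> set vs"
  unfolding cpairs_def by (cases vs) (auto dest: set_zip_leftD set_zip_rightD)

lemma snd_cpairs: "snd ` cpairs vs = set (tl vs)"
proof -
  have aux: "map snd (zip (a # l) l) = l" for a :: 'a and l by (induction l arbitrary: a) auto
  have "map snd (zip vs (tl vs)) = tl vs" using aux by (cases vs) auto
  then show ?thesis unfolding cpairs_def by (metis set_map)
qed

lemma path_unique:
  "distinct vs \<Longrightarrow> distinct ws \<Longrightarrow> set vs = set ws \<Longrightarrow> cpairs vs = cpairs ws \<Longrightarrow> vs = ws"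
proof (induction vs arbitrary: ws)
  case Nil then show ?case by simp
next
  case (Cons a vs')
  obtain b ws' where ws: "ws = b # ws'" using Cons.prems by (cases ws) auto
  have "set (tl (a # vs')) = set (tl ws)" using Cons.prems(4) snd_cpairs by metis
  then have st: "set vs' = set ws'" using ws by simp
  have ab: "a = b"
  proof (rule ccontr)
    assume "a \<noteq> b"
    then have "b \<in> set vs'" using Cons.prems(3) ws by auto
    then show False using st Cons.prems(2) ws by auto
  qed
  have c1: "cpairs vs' = cpairs (a # vs') - {p. fst p = a}"
    using Cons.prems(1) cpairs_subset[of vs'] by (auto simp: cpairs_Cons)
  have c2: "cpairs ws' = cpairs (b # ws') - {p. fst p = b}"
    using Cons.prems(2) ws cpairs_subset[of ws'] by (auto simp: cpairs_Cons)
  have "vs' = ws'"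
    apply (rule Cons.IH)
    using Cons.prems ws st c1 c2 ab by auto
  then show ?case using ws ab by simp
qed

lemma del_nth_cong:
  assumes "length xs = length ys" "\<And>j. j < length xs \<Longrightarrow> j \<noteq> i \<Longrightarrow> xs ! j = ys ! j"
  shows "del_nth i xs = del_nth i ys"
proof -
  have "take i xs = take i ys" by (rule nth_equalityI) (use assms in auto)
  moreover have "drop (Suc i) xs = drop (Suc i) ys" by (rule nth_equalityI) (use assms in auto)
  ultimately show ?thesis unfolding del_nth_def by simp
qed

lemma del_nth_map: "del_nth i (map f xs) = map f (del_nth i xs)"
  unfolding del_nth_def by (simp add: take_map drop_map)

lemma tl_del_nth: "i \<ge> 1 \<Longrightarrow> tl (del_nth i xs) = del_nth (i - 1) (tl xs)"
  unfolding del_nth_def by (cases xs; cases i) auto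

lemma del_nth_remove1: "distinct xs \<Longrightarrow> i < length xs \<Longrightarrow> remove1 (xs ! i) xs = del_nth i xs"
proof (induction xs arbitrary: i)
  case Nil then show ?case by simp
next
  case (Cons a xs) then show ?case
    by (cases i) (auto simp: del_nth_def)
qed

lemma length_del_nth: "i < length xs \<Longrightarrow> length (del_nth i xs) = length xs - 1"
  unfolding del_nth_def by simp

lemma nth_del_nth: "i < length xs \<Longrightarrow> j < length xs - 1 \<Longrightarrow>
  del_nth i xs ! j = (if j < i then xs ! j else xs ! Suc j)"
  unfolding del_nth_def by (auto simp: nth_append min_def)

abbreviation RR :: "('v \<times> 'v) set \<Rightarrow> ('v \<times> 'v) set" where
  "RR H \<equiv> (H \<union> H\<inverse>)\<^sup>*"

lemma RR_sym: "(v, w) \<in> RR H \<Longrightarrow> (w, v) \<in> RR H"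
  using sym_rtrancl[OF sym_Un_converse[of H]] by (auto dest: symD)

lemma RR_trans: "(u, v) \<in> RR H \<Longrightarrow> (v, w) \<in> RR H \<Longrightarrow> (u, w) \<in> RR H"
  by (rule rtrancl_trans)

lemma ucomp_self: "v \<in> V \<Longrightarrow> v \<in> ucomp V H v"
  unfolding ucomp_def by auto

lemma ucomp_sub: "ucomp V H v \<subseteq> V"
  unfolding ucomp_def by auto

lemma ucomp_eq: "w \<in> ucomp V H v \<Longrightarrow> ucomp V H w = ucomp V H v"
proof -
  assume "w \<in> ucomp V H v"
  then have vw: "(v, w) \<in> RR H" "(w, v) \<in> RR H" unfolding ucomp_def using RR_sym by auto
  show ?thesis unfolding ucomp_def
  proof (intro Collect_cong conj_cong refl iffI)
    fix x assume "(w, x) \<in> RR H" then show "(v, x) \<in> RR H" using vw RR_trans by metis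
  next
    fix x assume "(v, x) \<in> RR H" then show "(w, x) \<in> RR H" using vw RR_trans by metis
  qed
qed

lemma ucomp_meet: "x \<in> ucomp V H v \<Longrightarrow> x \<in> ucomp V H w \<Longrightarrow> ucomp V H v = ucomp V H w"
  using ucomp_eq by metis

lemma comps_ne: "C \<in> comps V H \<Longrightarrow> C \<noteq> {}"
  unfolding comps_def using ucomp_self by (metis empty_iff imageE)

lemma comps_sub: "C \<in> comps V H \<Longrightarrow> C \<subseteq> V"
  unfolding comps_def using ucomp_sub by (metis imageE)

lemma comps_ucomp: "C \<in> comps V H \<Longrightarrow> x \<in> C \<Longrightarrow> ucomp V H x = C"
  unfolding comps_def using ucomp_eq by (metis imageE)

lemma ucomp_in_comps: "v \<in> V \<Longrightarrow> ucomp V H v \<in> comps V H"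
  unfolding comps_def by auto

lemma comps_disj: "C \<in> comps V H \<Longrightarrow> C' \<in> comps V H \<Longrightarrow> x \<in> C \<Longrightarrow> x \<in> C' \<Longrightarrow> C = C'"
  using comps_ucomp by metis

lemma finite_comps: "finite V \<Longrightarrow> finite (comps V H)"
  unfolding comps_def by simp

lemma comps_Min: "finite V \<Longrightarrow> C \<in> comps V H \<Longrightarrow> Min C \<in> C"
  using comps_ne comps_sub by (metis Min_in finite_subset)

lemma inj_Min_comps: "finite V \<Longrightarrow> inj_on Min (comps V (H::('v::linorder \<times> 'v) set))"
  by (rule inj_onI) (metis comps_Min comps_disj)

lemma ucomp_closed: "H \<subseteq> V \<times> V \<Longrightarrow> (a, b) \<in> H \<Longrightarrow> a \<in> ucomp V H v \<or> b \<in> ucomp V H v \<Longrightarrow>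
  a \<in> ucomp V H v \<and> b \<in> ucomp V H v"
proof -
  assume H: "H \<subseteq> V \<times> V" "(a, b) \<in> H" "a \<in> ucomp V H v \<or> b \<in> ucomp V H v"
  have ab: "(a, b) \<in> RR H" "(b, a) \<in> RR H" using H(2) by auto
  show ?thesis using H ab unfolding ucomp_def by (auto intro: RR_trans)
qed

lemma ucomp_charac:
  assumes "S \<subseteq> V" "v \<in> S" "\<And>w. w \<in> S \<Longrightarrow> (v, w) \<in> RR H"
    and "\<And>a b. (a, b) \<in> H \<Longrightarrow> a \<in> S \<or> b \<in> S \<Longrightarrow> a \<in> S \<and> b \<in> S"
  shows "ucomp V H v = S"
proof
  show "S \<subseteq> ucomp V H v" using assms(1,3) unfolding ucomp_def by auto
  have "(v, w) \<in> RR H \<Longrightarrow> w \<in> S" for w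
  proof (induction rule: rtrancl_induct)
    case base then show ?case using assms(2) .
  next
    case (step y z) then show ?case using assms(4)[of y z] assms(4)[of z y] by auto
  qed
  then show "ucomp V H v \<subseteq> S" unfolding ucomp_def by auto
qed

lemma cpairs_conn: "cpairs vs \<subseteq> H \<Longrightarrow> w \<in> set vs \<Longrightarrow> (hd vs, w) \<in> RR H"
proof (induction vs arbitrary: w)
  case Nil then show ?case by simp
next
  case (Cons a vs)
  show ?case
  proof (cases "w = a")
    case True then show ?thesis by simp
  next
    case False
    then have ne: "vs \<noteq> []" "w \<in> set vs" using Cons.prems by auto
    then have "(a, hd vs) \<in> H" "cpairs vs \<subseteq> H" using Cons.prems(1) by (auto simp: cpairs_Cons)
    then have "(a, hd vs) \<in> RR H" "(hd vs, w) \<in> RR H" using Cons.IH ne by auto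
    then show ?thesis by (auto intro: RR_trans)
  qed
qed

definition ispath :: "('v \<times> 'v) set \<Rightarrow> 'v set \<Rightarrow> 'v list \<Rightarrow> bool" where
  "ispath H C vs \<longleftrightarrow> distinct vs \<and> set vs = C \<and> {e \<in> H. fst e \<in> C \<or> snd e \<in> C} = cpairs vs"

definition path_of :: "('v \<times> 'v) set \<Rightarrow> 'v set \<Rightarrow> 'v list" where
  "path_of H C = (SOME vs. ispath H C vs)"

lemma simple_dipath_iff: "is_simple_dipath C H \<longleftrightarrow> (\<exists>vs. ispath H C vs)"
  unfolding is_simple_dipath_def ispath_def cpairs_idx ..

lemma ispath_unique: "ispath H C vs \<Longrightarrow> ispath H C ws \<Longrightarrow> vs = ws"
  unfolding ispath_def using path_unique by metis

lemma path_of_eq: "ispath H C vs \<Longrightarrow> path_of H C = vs"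
  unfolding path_of_def using ispath_unique by (metis someI)

lemma multipath_path: "multipath V E H \<Longrightarrow> C \<in> comps V H \<Longrightarrow> ispath H C (path_of H C)"
  unfolding multipath_def simple_dipath_iff path_of_def by (metis someI)

lemma split_comp:
  assumes H': "H' \<subseteq> V \<times> V" and D: "D = ucomp V H' u" and P: "ispath H' D (xs @ ys)"
    and ne: "xs \<noteq> []" "ys \<noteq> []" and e: "e = (last xs, hd ys)" and H: "H = H' - {e}"
  shows "\<And>v. v \<in> set xs \<Longrightarrow> ucomp V H v = set xs"
    and "\<And>v. v \<in> set ys \<Longrightarrow> ucomp V H v = set ys"
    and "ispath H (set xs) xs" and "ispath H (set ys) ys"
    and "\<And>v. v \<in> V - D \<Longrightarrow> ucomp V H v = ucomp V H' v"
    and "\<And>v. v \<in> V - D \<Longrightarrow> {e' \<in> H. fst e' \<in> ucomp V H' v \<or> snd e' \<in> ucomp V H' v}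
           = {e' \<in> H'. fst e' \<in> ucomp V H' v \<or> snd e' \<in> ucomp V H' v}"
    and "set xs \<union> set ys = D" and "set xs \<inter> set ys = {}"
proof -
  have dist: "distinct xs" "distinct ys" "set xs \<inter> set ys = {}" using P unfolding ispath_def by auto
  have Dset: "D = set xs \<union> set ys" using P unfolding ispath_def by auto
  have DV: "D \<subseteq> V" using D ucomp_sub by metis
  have cp: "cpairs (xs @ ys) = cpairs xs \<union> insert e (cpairs ys)" using cpairs_append[OF ne] e by simp
  have touchD: "{e \<in> H'. fst e \<in> D \<or> snd e \<in> D} = cpairs (xs @ ys)" using P unfolding ispath_def by auto
  have exs: "fst e \<in> set xs" "snd e \<in> set ys" using e ne by auto
  have cxs: "cpairs xs \<subseteq> set xs \<times> set xs" "cpairs ys \<subseteq> set ys \<times> set ys" by (rule cpairs_subset)+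
  have enot: "e \<notin> cpairs xs" "e \<notin> cpairs ys" using exs cxs dist(3) by (metis disjoint_iff mem_Sigma_iff prod.collapse subsetD)+
  have cpH': "cpairs xs \<subseteq> H'" "cpairs ys \<subseteq> H'" using touchD cp by auto
  have cpH: "cpairs xs \<subseteq> H" "cpairs ys \<subseteq> H" using cpH' enot H by auto
  have tx: "(a, b) \<in> cpairs xs" if "(a, b) \<in> H" "a \<in> set xs \<or> b \<in> set xs" for a b
  proof -
    have ne: "(a, b) \<noteq> e" using that H by auto
    have "(a, b) \<in> H'" using that H by auto
    moreover have "a \<in> D \<or> b \<in> D" using that Dset by auto
    ultimately have "(a, b) \<in> cpairs (xs @ ys)" using touchD by (metis (mono_tags, lifting) fst_conv mem_Collect_eq snd_conv)
    moreover have "(a, b) \<notin> cpairs ys" using that cxs dist(3) by blast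
    ultimately show ?thesis using cp ne by auto
  qed
  have ty: "(a, b) \<in> cpairs ys" if "(a, b) \<in> H" "a \<in> set ys \<or> b \<in> set ys" for a b
  proof -
    have ne: "(a, b) \<noteq> e" using that H by auto
    have "(a, b) \<in> H'" using that H by auto
    moreover have "a \<in> D \<or> b \<in> D" using that Dset by auto
    ultimately have "(a, b) \<in> cpairs (xs @ ys)" using touchD by (metis (mono_tags, lifting) fst_conv mem_Collect_eq snd_conv)
    moreover have "(a, b) \<notin> cpairs xs" using that cxs dist(3) by blast
    ultimately show ?thesis using cp ne by auto
  qed
  have ux: "ucomp V H (hd xs) = set xs"
    apply (rule ucomp_charac)
    using Dset DV apply blast
    using ne apply simp
    using cpairs_conn[OF cpH(1)] apply simp
    using tx cxs by blast
  have uy: "ucomp V H (hd ys) = set ys"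
    apply (rule ucomp_charac)
    using Dset DV apply blast
    using ne apply simp
    using cpairs_conn[OF cpH(2)] apply simp
    using ty cxs by blast
  show "\<And>v. v \<in> set xs \<Longrightarrow> ucomp V H v = set xs" using ux ucomp_eq by metis
  show "\<And>v. v \<in> set ys \<Longrightarrow> ucomp V H v = set ys" using uy ucomp_eq by metis
  show "ispath H (set xs) xs" unfolding ispath_def using dist tx cpH(1) cxs by auto
  show "ispath H (set ys) ys" unfolding ispath_def using dist ty cpH(2) cxs by auto
  show "set xs \<union> set ys = D" "set xs \<inter> set ys = {}" using Dset dist by auto
  have eD: "fst e \<in> D" "snd e \<in> D" using exs Dset by auto
  have uD: "ucomp V H' v \<inter> D = {}" if "v \<in> V - D" for v
  proof (rule ccontr)
    assume "ucomp V H' v \<inter> D \<noteq> {}"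
    then obtain x where "x \<in> ucomp V H' v" "x \<in> ucomp V H' u" using D by auto
    then have "ucomp V H' v = ucomp V H' u" by (rule ucomp_meet)
    then show False using that ucomp_self D by (metis DiffE)
  qed
  show "\<And>v. v \<in> V - D \<Longrightarrow> {e' \<in> H. fst e' \<in> ucomp V H' v \<or> snd e' \<in> ucomp V H' v}
           = {e' \<in> H'. fst e' \<in> ucomp V H' v \<or> snd e' \<in> ucomp V H' v}"
  proof -
    fix v assume "v \<in> V - D"
    then have "ucomp V H' v \<inter> D = {}" by (rule uD)
    then have "\<not> (fst e \<in> ucomp V H' v \<or> snd e \<in> ucomp V H' v)" using eD by blast
    then show "{e' \<in> H. fst e' \<in> ucomp V H' v \<or> snd e' \<in> ucomp V H' v}
           = {e' \<in> H'. fst e' \<in> ucomp V H' v \<or> snd e' \<in> ucomp V H' v}" using H by blast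
  qed
  show "ucomp V H v = ucomp V H' v" if v: "v \<in> V - D" for v
  proof (rule ucomp_charac)
    show "ucomp V H' v \<subseteq> V" by (rule ucomp_sub)
    show "v \<in> ucomp V H' v" using v ucomp_self by auto
    have "(v, w) \<in> RR H' \<Longrightarrow> (v, w) \<in> RR H \<and> w \<notin> D" for w
    proof (induction rule: rtrancl_induct)
      case base then show ?case using v by simp
    next
      case (step y z)
      then have "(y, z) \<noteq> e" "(z, y) \<noteq> e" using eD by auto
      then have yz: "(y, z) \<in> H \<union> H\<inverse>" using step(2) H by auto
      then have "(v, z) \<in> RR H" using step(3) by (meson rtrancl.rtrancl_into_rtrancl)
      moreover have "z \<notin> D"
      proof
        assume "z \<in> D"
        then have "(u, z) \<in> RR H'" using D unfolding ucomp_def by auto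
        moreover have "(v, z) \<in> RR H'" using step(1,2) by (meson rtrancl.rtrancl_into_rtrancl)
        ultimately have "(u, v) \<in> RR H'" using RR_sym RR_trans by metis
        then show False using v D unfolding ucomp_def by auto
      qed
      ultimately show ?case by simp
    qed
    then show "\<And>w. w \<in> ucomp V H' v \<Longrightarrow> (v, w) \<in> RR H" unfolding ucomp_def by auto
    show "\<And>a b. (a, b) \<in> H \<Longrightarrow> a \<in> ucomp V H' v \<or> b \<in> ucomp V H' v \<Longrightarrow>
        a \<in> ucomp V H' v \<and> b \<in> ucomp V H' v"
      using ucomp_closed[OF H'] H by blast
  qed
qed

lemma decomp:
  assumes EV: "E \<subseteq> V \<times> V" and M: "multipath V E H'" and eH: "e \<in> H'"
  obtains xs ys where "xs \<noteq> []" "ys \<noteq> []" "e = (last xs, hd ys)"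
    "ispath H' (ucomp V H' (fst e)) (xs @ ys)" "H' \<subseteq> V \<times> V" "fst e \<in> V"
proof -
  have H'V: "H' \<subseteq> V \<times> V" using M EV unfolding multipath_def by auto
  have uV: "fst e \<in> V" using eH H'V by auto
  let ?D = "ucomp V H' (fst e)"
  have "?D \<in> comps V H'" using uV by (rule ucomp_in_comps)
  then have P: "ispath H' ?D (path_of H' ?D)" using multipath_path[OF M] by blast
  let ?ws = "path_of H' ?D"
  have "fst e \<in> ?D" using uV ucomp_self by metis
  then have "e \<in> cpairs ?ws" using P eH unfolding ispath_def by blast
  then obtain i where i: "e = (?ws ! i, ?ws ! Suc i)" "Suc i < length ?ws"
    unfolding cpairs_idx[symmetric] by blast
  define xs where "xs = take (Suc i) ?ws"
  define ys where "ys = drop (Suc i) ?ws"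
  have "xs \<noteq> []" "ys \<noteq> []" using i unfolding xs_def ys_def by auto
  moreover have "e = (last xs, hd ys)" using i unfolding xs_def ys_def
    by (simp add: take_Suc_conv_app_nth hd_drop_conv_nth)
  moreover have "xs @ ys = ?ws" unfolding xs_def ys_def by simp
  ultimately show ?thesis using that[of xs ys] P H'V uV by simp
qed

lemma multipath_remove:
  assumes EV: "E \<subseteq> V \<times> V" and M: "multipath V E H'" and eH: "e \<in> H'"
  shows "multipath V E (H' - {e})"
proof -
  obtain xs ys where d: "xs \<noteq> []" "ys \<noteq> []" "e = (last xs, hd ys)"
    "ispath H' (ucomp V H' (fst e)) (xs @ ys)" "H' \<subseteq> V \<times> V" "fst e \<in> V"
    using decomp[OF EV M eH] by blast
  let ?D = "ucomp V H' (fst e)"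
  let ?H = "H' - {e}"
  note s = split_comp[OF d(5) refl d(4) d(1,2,3) refl]
  have "is_simple_dipath C ?H" if C: "C \<in> comps V ?H" for C
  proof -
    obtain v where v: "v \<in> V" "C = ucomp V ?H v" using C unfolding comps_def by auto
    show ?thesis
    proof (cases "v \<in> ?D")
      case True
      then have "v \<in> set xs \<or> v \<in> set ys" using s(7) by auto
      then show ?thesis
      proof
        assume "v \<in> set xs" then have "C = set xs" using s(1) v by simp
        then show ?thesis using s(3) unfolding simple_dipath_iff by blast
      next
        assume "v \<in> set ys" then have "C = set ys" using s(2) v by simp
        then show ?thesis using s(4) unfolding simple_dipath_iff by blast
      qed
    next
      case False
      then have vD: "v \<in> V - ?D" using v by auto
      then have Ceq: "C = ucomp V H' v" using s(5) v by metis
      have "ispath H' C (path_of H' C)" using multipath_path[OF M] Ceq ucomp_in_comps[OF v(1)] by simp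
      then have "ispath ?H C (path_of H' C)" using s(6)[OF vD] Ceq unfolding ispath_def by simp
      then show ?thesis unfolding simple_dipath_iff by blast
    qed
  qed
  moreover have "?H \<subseteq> E" using M unfolding multipath_def by auto
  ultimately show ?thesis unfolding multipath_def by blast
qed

lemma multipath_diff:
  assumes EV: "E \<subseteq> V \<times> V" and M: "multipath V E H'" and F: "finite F"
  shows "multipath V E (H' - F)"
  using F
proof (induction F rule: finite_induct)
  case empty then show ?case using M by simp
next
  case (insert x F)
  have eq: "H' - insert x F = (H' - F) - {x}" by auto
  show ?case
  proof (cases "x \<in> H' - F")
    case True then show ?thesis using multipath_remove[OF EV insert.IH True] eq by simp
  next
    case False then have "(H' - F) - {x} = H' - F" by auto
    then show ?thesis using insert.IH eq by simp
  qed
qed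

lemma multipath_subset:
  assumes "finite V" "E \<subseteq> V \<times> V" "multipath V E H'" "K \<subseteq> H'"
  shows "multipath V E K"
proof -
  have "finite H'" using assms unfolding multipath_def by (meson finite_SigmaI finite_subset)
  then have "multipath V E (H' - (H' - K))" using multipath_diff assms by blast
  moreover have "H' - (H' - K) = K" using assms(4) by auto
  ultimately show ?thesis by simp
qed

lemma chain_exists:
  assumes "finite V" "E \<subseteq> V \<times> V" "multipath V E H" "multipath V E H'" "H \<subseteq> H'"
  shows "\<exists>es. is_chain V E H H' es"
proof -
  have "finite (H' - H)" using assms unfolding multipath_def by (meson finite_Diff finite_SigmaI finite_subset)
  then obtain es where es: "set es = H' - H" "distinct es" using finite_distinct_list by blast
  have "covers V E (H \<union> set (take i es)) (es ! i)" if i: "i < length es" for i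
  proof -
    have sub1: "H \<union> set (take i es) \<subseteq> H'" using es assms(5) set_take_subset[of i es] by blast
    have "es ! i \<in> H'" using es i nth_mem by blast
    then have sub2: "insert (es ! i) (H \<union> set (take i es)) \<subseteq> H'" using sub1 by blast
    have "es ! i \<notin> H" using es i nth_mem by blast
    moreover have "es ! i \<notin> set (take i es)"
    proof
      assume "es ! i \<in> set (take i es)"
      then obtain j where j: "j < length (take i es)" "take i es ! j = es ! i" by (auto simp: in_set_conv_nth)
      then have "j < i" "es ! j = es ! i" by auto
      then show False using nth_eq_iff_index_eq[OF es(2)] i by fastforce
    qed
    ultimately show ?thesis unfolding covers_def
      using multipath_subset[OF assms(1,2,4) sub1] multipath_subset[OF assms(1,2,4) sub2] by blast
  qed
  moreover have "H \<union> set es = H'" using es assms(5) by auto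
  ultimately show ?thesis unfolding is_chain_def using assms(3) by blast
qed

definition rk :: "'a::linorder set \<Rightarrow> 'a \<Rightarrow> nat" where
  "rk S x = card {y \<in> S. y < x}"

lemma sl_less_iff:
  assumes "finite S" "j < card S" "k < card S"
  shows "sorted_list_of_set S ! k < sorted_list_of_set S ! j \<longleftrightarrow> k < j"
proof -
  let ?L = "sorted_list_of_set S"
  have st: "sorted_wrt (<) ?L" by (rule strict_sorted_list_of_set)
  have len: "length ?L = card S" by simp
  show ?thesis
  proof
    assume a: "?L ! k < ?L ! j"
    show "k < j"
    proof (rule ccontr)
      assume "\<not> k < j"
      then have "j < k \<or> j = k" by auto
      then show False using a sorted_wrt_nth_less[OF st] assms len by (metis less_asym less_irrefl)
    qed
  next
    assume "k < j" then show "?L ! k < ?L ! j" using sorted_wrt_nth_less[OF st] assms len by simp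
  qed
qed

lemma rk_nth:
  assumes "finite S" "j < card S"
  shows "rk S (sorted_list_of_set S ! j) = j"
proof -
  let ?L = "sorted_list_of_set S"
  have len: "length ?L = card S" by simp
  have dist: "distinct ?L" by simp
  have "{y \<in> S. y < ?L ! j} = (\<lambda>k. ?L ! k) ` {..<j}"
  proof
    show "{y \<in> S. y < ?L ! j} \<subseteq> (\<lambda>k. ?L ! k) ` {..<j}"
    proof
      fix y assume y: "y \<in> {y \<in> S. y < ?L ! j}"
      then have "y \<in> set ?L" using assms by simp
      then obtain k where k: "k < card S" "y = ?L ! k" using len by (metis in_set_conv_nth)
      then have "k < j" using sl_less_iff[OF assms(1,2) k(1)] y by simp
      then show "y \<in> (\<lambda>k. ?L ! k) ` {..<j}" using k by auto
    qed
  next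
    show "(\<lambda>k. ?L ! k) ` {..<j} \<subseteq> {y \<in> S. y < ?L ! j}"
    proof
      fix y assume "y \<in> (\<lambda>k. ?L ! k) ` {..<j}"
      then obtain k where k: "k < j" "y = ?L ! k" by auto
      then have "k < card S" using assms by simp
      then have "y \<in> set ?L" "y < ?L ! j" using k sl_less_iff[OF assms] len by auto
      then show "y \<in> {y \<in> S. y < ?L ! j}" using assms by simp
    qed
  qed
  moreover have "inj_on (\<lambda>k. ?L ! k) {..<j}"
    by (rule inj_onI) (use dist len assms in \<open>auto simp: nth_eq_iff_index_eq\<close>)
  ultimately show ?thesis unfolding rk_def by (simp add: card_image)
qed

lemma nth_rk:
  assumes "finite S" "x \<in> S"
  shows "sorted_list_of_set S ! rk S x = x" "rk S x < card S"
proof -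
  have "x \<in> set (sorted_list_of_set S)" using assms by simp
  then obtain j where j: "j < card S" "sorted_list_of_set S ! j = x" by (metis in_set_conv_nth length_sorted_list_of_set)
  then have "rk S x = j" using rk_nth[OF assms(1) j(1)] by simp
  then show "sorted_list_of_set S ! rk S x = x" "rk S x < card S" using j by auto
qed

lemma rk_mono:
  assumes "finite S" "x \<in> S" "y \<in> S" "x < y"
  shows "rk S x < rk S y"
proof -
  have "{z \<in> S. z < x} \<subset> {z \<in> S. z < y}" using assms by auto
  then show ?thesis unfolding rk_def using assms(1) by (simp add: psubset_card_mono)
qed

lemma rk_max: "finite S \<Longrightarrow> x \<in> S \<Longrightarrow> y \<in> S \<Longrightarrow> rk S (max x y) = max (rk S x) (rk S y)"
  using rk_mono[of S x y] rk_mono[of S y x] by (cases x y rule: linorder_cases) (auto simp: max_def)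

lemma rk_min: "finite S \<Longrightarrow> x \<in> S \<Longrightarrow> y \<in> S \<Longrightarrow> rk S (min x y) = min (rk S x) (rk S y)"
  using rk_mono[of S x y] rk_mono[of S y x] by (cases x y rule: linorder_cases) (auto simp: min_def)

lemma rk_inj: "finite S \<Longrightarrow> x \<in> S \<Longrightarrow> y \<in> S \<Longrightarrow> rk S x = rk S y \<Longrightarrow> x = y"
  using nth_rk by metis

lemma sl_remove:
  assumes "finite S" "x \<in> S"
  shows "sorted_list_of_set (S - {x}) = del_nth (rk S x) (sorted_list_of_set S)"
proof -
  have "sorted_list_of_set (S - {x}) = remove1 x (sorted_list_of_set S)"
    using assms by (simp add: sorted_list_of_set_remove)
  also have "\<dots> = remove1 (sorted_list_of_set S ! rk S x) (sorted_list_of_set S)" using nth_rk[OF assms] by simp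
  also have "\<dots> = del_nth (rk S x) (sorted_list_of_set S)"
    using nth_rk[OF assms] by (intro del_nth_remove1) auto
  finally show ?thesis .
qed

lemma rk_zero_iff:
  assumes "finite S" "x \<in> S"
  shows "rk S x = 0 \<longleftrightarrow> x = Min S"
proof
  assume "rk S x = 0"
  then have "{y \<in> S. y < x} = {}" unfolding rk_def using assms(1) by simp
  then show "x = Min S" using assms by (metis (mono_tags, lifting) Min_in Min_le empty_iff mem_Collect_eq nless_le order_antisym_conv ex_in_conv)
next
  assume "x = Min S"
  then have "{y \<in> S. y < x} = {}" using assms Min_le by (metis (mono_tags, lifting) Collect_empty_eq leD)
  then show "rk S x = 0" unfolding rk_def by (simp only: card.empty)
qed

definition Ms :: "'v::linorder set \<Rightarrow> ('v \<times> 'v) set \<Rightarrow> 'v set" where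
  "Ms V H = Min ` comps V H"

definition Lst :: "'v::linorder set \<Rightarrow> ('v \<times> 'v) set \<Rightarrow> 'v list" where
  "Lst V H = sorted_list_of_set (Ms V H)"

definition valA :: "('v \<Rightarrow> 'a::ring_1) \<Rightarrow> 'v list \<Rightarrow> 'a" where
  "valA g vs = prod_list (map g vs)"

definition valM :: "('a::ring_1 \<Rightarrow> 'm \<Rightarrow> 'm) \<Rightarrow> ('m \<Rightarrow> 'a \<Rightarrow> 'm) \<Rightarrow> 'v \<Rightarrow> ('v \<Rightarrow> 'a) \<Rightarrow> 'm \<Rightarrow> 'v list \<Rightarrow> 'm" where
  "valM lact ract v0 g m vs = lact (valA g (takeWhile (\<lambda>x. x \<noteq> v0) vs)) (ract m (valA g (tl (dropWhile (\<lambda>x. x \<noteq> v0) vs))))"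

definition Tn :: "('a::ring_1 \<Rightarrow> 'm \<Rightarrow> 'm) \<Rightarrow> ('m \<Rightarrow> 'a \<Rightarrow> 'm) \<Rightarrow> 'v::linorder set \<Rightarrow> ('v \<times> 'v) set \<Rightarrow> ('v \<Rightarrow> 'a) \<Rightarrow> 'm \<Rightarrow> 'm \<times> 'a list" where
  "Tn lact ract V H g m = (valM lact ract (Min V) g m (path_of H (ucomp V H (Min V))),
     map (\<lambda>\<mu>. valA g (path_of H (ucomp V H \<mu>))) (tl (Lst V H)))"

lemma valA_append: "valA g (xs @ ys) = valA g xs * valA g ys"
  unfolding valA_def by simp

lemma valA_ones: "(\<And>x. x \<in> set xs \<Longrightarrow> g x = 1) \<Longrightarrow> valA g xs = 1"
  unfolding valA_def by (induction xs) auto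

locale bim =
  fixes lact :: "'a::ring_1 \<Rightarrow> 'm \<Rightarrow> 'm" and ract :: "'m \<Rightarrow> 'a \<Rightarrow> 'm"
  assumes lm: "\<And>a b m. lact (a * b) m = lact a (lact b m)"
    and l1: "\<And>m. lact 1 m = m"
    and rm: "\<And>a b m. ract m (a * b) = ract (ract m a) b"
    and r1: "\<And>m. ract m 1 = m"
    and lr: "\<And>a b m. ract (lact a m) b = lact a (ract m b)"
begin

lemma valM_app1:
  assumes "v0 \<in> set xs"
  shows "valM lact ract v0 g m (xs @ ys) = ract (valM lact ract v0 g m xs) (valA g ys)"
proof -
  have tw: "takeWhile (\<lambda>x. x \<noteq> v0) (xs @ ys) = takeWhile (\<lambda>x. x \<noteq> v0) xs"
    using assms by (simp add: takeWhile_append1)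
  have dw: "dropWhile (\<lambda>x. x \<noteq> v0) (xs @ ys) = dropWhile (\<lambda>x. x \<noteq> v0) xs @ ys"
    using assms by (simp add: dropWhile_append1)
  have ne: "dropWhile (\<lambda>x. x \<noteq> v0) xs \<noteq> []" using assms by (simp add: dropWhile_eq_Nil_conv)
  have tl: "tl (dropWhile (\<lambda>x. x \<noteq> v0) xs @ ys) = tl (dropWhile (\<lambda>x. x \<noteq> v0) xs) @ ys"
    using ne by (rule tl_append2)
  show ?thesis unfolding valM_def tw dw tl valA_append rm lr ..
qed

lemma valM_app2:
  assumes "v0 \<notin> set xs"
  shows "valM lact ract v0 g m (xs @ ys) = lact (valA g xs) (valM lact ract v0 g m ys)"
proof -
  have tw: "takeWhile (\<lambda>x. x \<noteq> v0) (xs @ ys) = xs @ takeWhile (\<lambda>x. x \<noteq> v0) ys"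
    using assms by (intro takeWhile_append2) auto
  have dw: "dropWhile (\<lambda>x. x \<noteq> v0) (xs @ ys) = dropWhile (\<lambda>x. x \<noteq> v0) ys"
    using assms by (intro dropWhile_append2) auto
  show ?thesis unfolding valM_def tw dw valA_append lm ..
qed

lemma valM_ones: "(\<And>x. x \<in> set xs \<Longrightarrow> g x = 1) \<Longrightarrow> valM lact ract v0 g m xs = m"
proof -
  assume a: "\<And>x. x \<in> set xs \<Longrightarrow> g x = 1"
  have "valA g (takeWhile (\<lambda>x. x \<noteq> v0) xs) = 1"
  proof (rule valA_ones)
    fix x assume "x \<in> set (takeWhile (\<lambda>x. x \<noteq> v0) xs)"
    then have "x \<in> set xs" using set_takeWhileD by fast
    then show "g x = 1" by (rule a)
  qed
  moreover have "valA g (tl (dropWhile (\<lambda>x. x \<noteq> v0) xs)) = 1"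
  proof (rule valA_ones)
    fix x assume "x \<in> set (tl (dropWhile (\<lambda>x. x \<noteq> v0) xs))"
    then have "x \<in> set (dropWhile (\<lambda>x. x \<noteq> v0) xs)" by (cases "dropWhile (\<lambda>x. x \<noteq> v0) xs") auto
    then have "x \<in> set xs" by (rule set_dropWhileD)
    then show "g x = 1" by (rule a)
  qed
  ultimately show ?thesis unfolding valM_def by (simp add: l1 r1)
qed

end

lemma Ms_finite: "finite V \<Longrightarrow> finite (Ms V H)"
  unfolding Ms_def by (simp add: finite_comps)

lemma Ms_in: "finite V \<Longrightarrow> v \<in> V \<Longrightarrow> Min (ucomp V H v) \<in> Ms V H"
  unfolding Ms_def using ucomp_in_comps by (rule imageI)

lemma Ms_elem:
  assumes "finite V" "\<mu> \<in> Ms V H"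
  shows "\<mu> \<in> V" "ucomp V H \<mu> \<in> comps V H" "Min (ucomp V H \<mu>) = \<mu>" "\<mu> \<in> ucomp V H \<mu>"
proof -
  obtain C where C: "C \<in> comps V H" "\<mu> = Min C" using assms(2) unfolding Ms_def by blast
  have muC: "\<mu> \<in> C" using comps_Min[OF assms(1) C(1)] C by simp
  then have u: "ucomp V H \<mu> = C" using comps_ucomp C(1) by metis
  show "\<mu> \<in> V" using comps_sub[OF C(1)] muC by blast
  show "ucomp V H \<mu> \<in> comps V H" "Min (ucomp V H \<mu>) = \<mu>" "\<mu> \<in> ucomp V H \<mu>"
    using u C muC by simp_all
qed

lemma card_Ms: "finite V \<Longrightarrow> card (Ms V H) = card (comps V H)"
  unfolding Ms_def by (rule card_image) (rule inj_Min_comps)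

lemma comp_idx_rk:
  assumes "finite V" "v \<in> V"
  shows "comp_idx V H v = rk (Ms V H) (Min (ucomp V H v))"
proof -
  let ?a = "Min (ucomp V H v)"
  have "Min ` {C \<in> comps V H. Min C < ?a} = {y \<in> Ms V H. y < ?a}" unfolding Ms_def
  proof (rule set_eqI, rule iffI)
    fix y assume "y \<in> Min ` {C \<in> comps V H. Min C < ?a}"
    then obtain C where "C \<in> comps V H" "Min C < ?a" "y = Min C" by blast
    then show "y \<in> {y \<in> Min ` comps V H. y < ?a}" by blast
  next
    fix y assume "y \<in> {y \<in> Min ` comps V H. y < ?a}"
    then obtain C where "C \<in> comps V H" "y < ?a" "y = Min C" by blast
    then show "y \<in> Min ` {C \<in> comps V H. Min C < ?a}" by blast
  qed
  moreover have "inj_on Min {C \<in> comps V H. Min C < ?a}"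
    using inj_Min_comps[OF assms(1)] by (rule inj_on_subset) blast
  then have "card (Min ` {C \<in> comps V H. Min C < ?a}) = card {C \<in> comps V H. Min C < ?a}"
    by (rule card_image)
  ultimately show ?thesis unfolding comp_idx_def rk_def by simp
qed

lemma MinV_in_comp:
  assumes "finite V" "C \<in> comps V H"
  shows "Min V \<in> C \<longleftrightarrow> Min C = Min V"
proof
  have CV: "C \<subseteq> V" "C \<noteq> {}" using comps_sub[OF assms(2)] comps_ne[OF assms(2)] by auto
  then have fC: "finite C" using assms(1) finite_subset by auto
  {
    assume "Min V \<in> C"
    then have "Min C \<le> Min V" using fC by simp
    moreover have "Min V \<le> Min C" using CV fC assms(1) using Min_in[OF fC CV(2)] Min_le[OF assms(1)] by blast
    ultimately show "Min C = Min V" by simp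
  }
  {
    assume "Min C = Min V"
    then show "Min V \<in> C" using fC CV Min_in by metis
  }
qed

lemma MinV_Ms:
  assumes "finite V" "V \<noteq> {}"
  shows "Min V \<in> Ms V H" "Min (Ms V H) = Min V"
proof -
  have mv: "Min V \<in> V" using assms by simp
  have c: "ucomp V H (Min V) \<in> comps V H" using mv ucomp_in_comps by metis
  have "Min (ucomp V H (Min V)) = Min V"
    using MinV_in_comp[OF assms(1) c] ucomp_self[OF mv] by simp
  then show mem: "Min V \<in> Ms V H" using Ms_in[OF assms(1) mv] by metis
  have "\<forall>\<mu> \<in> Ms V H. Min V \<le> \<mu>" using Ms_elem(1)[OF assms(1)] assms by simp
  then show "Min (Ms V H) = Min V" using mem Ms_finite[OF assms(1)]
    by (metis Min_eqI)
qed

context bim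
begin

lemma step:
  assumes fin: "finite V" and EV: "E \<subseteq> V \<times> V" and cov: "covers V E H e"
  shows "cover_map lact ract V H e (Tn lact ract V H g m) = Tn lact ract V (insert e H) g m"
proof -
  define H' where "H' = insert e H"
  have M': "multipath V E H'" and eH: "e \<notin> H" and M: "multipath V E H"
    using cov unfolding covers_def H'_def by auto
  obtain xs ys where d: "xs \<noteq> []" "ys \<noteq> []" "e = (last xs, hd ys)"
    "ispath H' (ucomp V H' (fst e)) (xs @ ys)" "H' \<subseteq> V \<times> V" "fst e \<in> V"
    using decomp[OF EV M', of e] H'_def by blast
  define D where "D = ucomp V H' (fst e)"
  have Heq: "H = H' - {e}" using eH H'_def by auto
  have P': "ispath H' D (xs @ ys)" using d(4) D_def by simp
  note s = split_comp[OF d(5) D_def P' d(1,2,3) Heq]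
  have fe: "fst e \<in> set xs" "snd e \<in> set ys" using d(1-3) by auto
  have sndV: "snd e \<in> V" using d(5) H'_def by auto
  have DV: "D \<subseteq> V" unfolding D_def by (rule ucomp_sub)
  have Dc: "D \<in> comps V H'" unfolding D_def using d(6) by (rule ucomp_in_comps)
  have uD: "\<And>v. v \<in> D \<Longrightarrow> ucomp V H' v = D" using comps_ucomp[OF Dc] by blast
  have uxs: "\<And>v. v \<in> set xs \<Longrightarrow> ucomp V H v = set xs" by (rule s(1))
  have uys: "\<And>v. v \<in> set ys \<Longrightarrow> ucomp V H v = set ys" by (rule s(2))
  have pxs: "path_of H (set xs) = xs" using s(3) by (rule path_of_eq)
  have pys: "path_of H (set ys) = ys" using s(4) by (rule path_of_eq)
  have pD: "path_of H' D = xs @ ys" using P' by (rule path_of_eq)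
  have Dxy: "D = set xs \<union> set ys" using s(7) by simp
  have disj: "set xs \<inter> set ys = {}" by (rule s(8))
  have uO: "ucomp V H v = ucomp V H' v" if "v \<in> V - D" for v using s(5) that by blast
  have pO: "path_of H (ucomp V H v) = path_of H' (ucomp V H' v)" if v: "v \<in> V - D" for v
  proof -
    have "ispath H (ucomp V H' v) = ispath H' (ucomp V H' v)"
      unfolding ispath_def using s(6)[OF v] by simp
    then show ?thesis unfolding path_of_def uO[OF v] by simp
  qed
  have uOD: "ucomp V H' v \<inter> D = {}" if v: "v \<in> V - D" for v
  proof (rule ccontr)
    assume "ucomp V H' v \<inter> D \<noteq> {}"
    then obtain w where w: "w \<in> ucomp V H' v" "w \<in> D" by blast
    have "ucomp V H' w = ucomp V H' v" using w(1) by (rule ucomp_eq)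
    then have "ucomp V H' v = D" using uD[OF w(2)] by simp
    moreover have "v \<in> ucomp V H' v" using v by (intro ucomp_self) simp
    ultimately show False using v by simp
  qed
  define \<mu>s where "\<mu>s = Min (set xs)"
  define \<mu>t where "\<mu>t = Min (set ys)"
  have mus: "\<mu>s \<in> set xs" unfolding \<mu>s_def using d(1) by simp
  have mut: "\<mu>t \<in> set ys" unfolding \<mu>t_def using d(2) by simp
  have st_ne: "\<mu>s \<noteq> \<mu>t" using mus mut disj by blast
  have Cs: "set xs \<in> comps V H" using uxs[OF fe(1)] ucomp_in_comps[OF d(6), of H] by simp
  have Ct: "set ys \<in> comps V H" using uys[OF fe(2)] ucomp_in_comps[OF sndV, of H] by simp
  define S where "S = Ms V H"
  have finS: "finite S" unfolding S_def using fin by (rule Ms_finite)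
  have musS: "\<mu>s \<in> S" unfolding S_def Ms_def \<mu>s_def using Cs by blast
  have mutS: "\<mu>t \<in> S" unfolding S_def Ms_def \<mu>t_def using Ct by blast
  have ci_s: "comp_idx V H (fst e) = rk S \<mu>s"
    unfolding S_def \<mu>s_def using comp_idx_rk[OF fin d(6)] uxs[OF fe(1)] by simp
  have ci_t: "comp_idx V H (snd e) = rk S \<mu>t"
    unfolding S_def \<mu>t_def using comp_idx_rk[OF fin sndV] uys[OF fe(2)] by simp
  have MinD: "Min D = min \<mu>s \<mu>t" unfolding Dxy \<mu>s_def \<mu>t_def using d(1,2)
    by (simp add: Min_Un)
  have minD: "min \<mu>s \<mu>t \<in> D" using mus mut Dxy by (simp add: min_def)
  have maxD: "max \<mu>s \<mu>t \<in> D" using mus mut Dxy by (simp add: max_def)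
  have MsH': "Ms V H' = S - {max \<mu>s \<mu>t}"
  proof (rule set_eqI, rule iffI)
    fix y assume "y \<in> Ms V H'"
    then obtain v where v: "v \<in> V" "y = Min (ucomp V H' v)" unfolding Ms_def comps_def by blast
    show "y \<in> S - {max \<mu>s \<mu>t}"
    proof (cases "v \<in> D")
      case True
      then have "y = min \<mu>s \<mu>t" using v uD MinD by simp
      then show ?thesis using musS mutS st_ne by (auto simp: min_def max_def)
    next
      case False
      then have vV: "v \<in> V - D" using v by simp
      have yS: "y \<in> S" unfolding S_def using Ms_in[OF fin v(1), of H] uO[OF vV] v(2) by simp
      have "y \<in> ucomp V H' v" using comps_Min[OF fin ucomp_in_comps[OF v(1)]] v(2) by simp
      then have "y \<notin> D" using uOD[OF vV] by blast
      then show ?thesis using yS maxD by auto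
    qed
  next
    fix y assume y: "y \<in> S - {max \<mu>s \<mu>t}"
    then obtain v where v: "v \<in> V" "y = Min (ucomp V H v)" unfolding S_def Ms_def comps_def by blast
    show "y \<in> Ms V H'"
    proof (cases "v \<in> D")
      case True
      then have "y = \<mu>s \<or> y = \<mu>t" using v uxs uys Dxy \<mu>s_def \<mu>t_def by auto
      then have "y = min \<mu>s \<mu>t" using y by (auto simp: min_def max_def)
      then have "y = Min (ucomp V H' (fst e))" using MinD D_def by simp
      then show ?thesis using Ms_in[OF fin d(6)] by simp
    next
      case False
      then have "y = Min (ucomp V H' v)" using v uO by simp
      then show ?thesis using Ms_in[OF fin v(1)] by simp
    qed
  qed
  define L where "L = Lst V H"
  define s where "s = rk S \<mu>s"
  define t where "t = rk S \<mu>t"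
  have L_def': "L = sorted_list_of_set S" unfolding L_def Lst_def S_def ..
  have lenL: "length L = card S" unfolding L_def' by simp
  have distL: "distinct L" unfolding L_def' by simp
  have Ls: "L ! s = \<mu>s" "s < length L" unfolding L_def' s_def using nth_rk[OF finS musS] by simp_all
  have Lt: "L ! t = \<mu>t" "t < length L" unfolding L_def' t_def using nth_rk[OF finS mutS] by simp_all
  have s_ne_t: "s \<noteq> t" using Ls Lt st_ne by metis
  have LH': "Lst V H' = del_nth (max s t) L"
    unfolding Lst_def MsH' L_def' s_def t_def
    using sl_remove[OF finS] rk_max[OF finS musS mutS] musS mutS by (simp add: max_def)
  have minS: "min \<mu>s \<mu>t \<in> S" using musS mutS by (simp add: min_def)
  have Lmin: "L ! (min s t) = min \<mu>s \<mu>t"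
    using rk_min[OF finS musS mutS] nth_rk(1)[OF finS minS] unfolding s_def t_def L_def' by simp
  have LS: "L ! j \<in> S" if "j < length L" for j using that unfolding L_def' by (metis finS nth_mem set_sorted_list_of_set)
  define fH where "fH = (\<lambda>\<mu>. valA g (path_of H (ucomp V H \<mu>)))"
  define fH' where "fH' = (\<lambda>\<mu>. valA g (path_of H' (ucomp V H' \<mu>)))"
  have fsame: "fH' (L ! j) = fH (L ! j)" if j: "j < length L" "j \<noteq> s" "j \<noteq> t" for j
  proof -
    let ?\<mu> = "L ! j"
    have muS: "?\<mu> \<in> S" using LS j(1) by simp
    have ne: "?\<mu> \<noteq> \<mu>s" "?\<mu> \<noteq> \<mu>t" using j Ls Lt distL by (metis nth_eq_iff_index_eq)+
    have mm: "Min (ucomp V H ?\<mu>) = ?\<mu>" "?\<mu> \<in> V" using Ms_elem[OF fin] muS unfolding S_def by auto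
    have "?\<mu> \<notin> D"
    proof
      assume "?\<mu> \<in> D"
      then have "?\<mu> \<in> set xs \<or> ?\<mu> \<in> set ys" using Dxy by simp
      then show False
      proof
        assume "?\<mu> \<in> set xs" then have "Min (ucomp V H ?\<mu>) = \<mu>s" using uxs \<mu>s_def by simp
        then show False using mm ne by simp
      next
        assume "?\<mu> \<in> set ys" then have "Min (ucomp V H ?\<mu>) = \<mu>t" using uys \<mu>t_def by simp
        then show False using mm ne by simp
      qed
    qed
    then have "?\<mu> \<in> V - D" using mm by simp
    then show ?thesis unfolding fH_def fH'_def using pO by simp
  qed
  have fHs: "fH \<mu>s = valA g xs" unfolding fH_def using uxs[OF mus] pxs by simp
  have fHt: "fH \<mu>t = valA g ys" unfolding fH_def using uys[OF mut] pys by simp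
  have fmerge: "fH' (min \<mu>s \<mu>t) = fH \<mu>s * fH \<mu>t"
    unfolding fH'_def using uD[OF minD] pD fHs fHt by (simp add: valA_append)
  have TH: "Tn lact ract V H g m = (valM lact ract (Min V) g m (path_of H (ucomp V H (Min V))), map fH (tl L))"
    unfolding Tn_def fH_def L_def ..
  have TH': "Tn lact ract V H' g m = (valM lact ract (Min V) g m (path_of H' (ucomp V H' (Min V))),
      map fH' (tl (del_nth (max s t) L)))"
    unfolding Tn_def fH'_def LH' ..
  have cm: "cover_map lact ract V H e = merge_factors lact ract s t"
    unfolding cover_map_def ci_s ci_t s_def t_def ..
  have Vne: "V \<noteq> {}" using d(6) by blast
  have v0S: "Min V \<in> S" "Min S = Min V" unfolding S_def using MinV_Ms[OF fin Vne] by auto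
  have v0V: "Min V \<in> V" using fin Vne by simp
  have len_tl: "length (tl L) = length L - 1" by simp
  have tlnth: "tl L ! j = L ! Suc j" if "j < length L - 1" for j using that by (simp add: nth_tl)
  show ?thesis
    unfolding H'_def[symmetric] cm TH TH'
  proof (cases "Min V \<in> set xs")
    case True
    then have "Min (set xs) = Min V" using MinV_in_comp[OF fin Cs] by simp
    then have s0: "s = 0" unfolding s_def using rk_zero_iff[OF finS musS] v0S \<mu>s_def by simp
    then have t0: "t \<noteq> 0" "max s t = t" using s_ne_t by auto
    have m1: "path_of H (ucomp V H (Min V)) = xs" using uxs[OF True] pxs by simp
    have m2: "path_of H' (ucomp V H' (Min V)) = xs @ ys" using uD pD True Dxy by simp
    have "valM lact ract (Min V) g m (xs @ ys) = ract (valM lact ract (Min V) g m xs) (valA g ys)"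
      using True by (rule valM_app1)
    moreover have "map fH (tl L) ! (t - 1) = valA g ys" using t0 Lt fHt tlnth by simp
    moreover have "map fH' (tl (del_nth t L)) = del_nth (t - 1) (map fH (tl L))"
    proof -
      have "map fH' (tl (del_nth t L)) = del_nth (t - 1) (map fH' (tl L))"
        using t0 by (simp add: tl_del_nth del_nth_map)
      also have "\<dots> = del_nth (t - 1) (map fH (tl L))"
        by (rule del_nth_cong) (use fsame tlnth s0 in auto)
      finally show ?thesis .
    qed
    ultimately show "merge_factors lact ract s t (valM lact ract (Min V) g m (path_of H (ucomp V H (Min V))), map fH (tl L)) =
      (valM lact ract (Min V) g m (path_of H' (ucomp V H' (Min V))), map fH' (tl (del_nth (max s t) L)))"
      unfolding merge_factors_def m1 m2 using s0 t0 by simp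
  next
    case nx: False
    show "merge_factors lact ract s t (valM lact ract (Min V) g m (path_of H (ucomp V H (Min V))), map fH (tl L)) =
      (valM lact ract (Min V) g m (path_of H' (ucomp V H' (Min V))), map fH' (tl (del_nth (max s t) L)))"
    proof (cases "Min V \<in> set ys")
      case True
      then have "Min (set ys) = Min V" using MinV_in_comp[OF fin Ct] by simp
      then have t0: "t = 0" unfolding t_def using rk_zero_iff[OF finS mutS] v0S \<mu>t_def by simp
      then have s0: "s \<noteq> 0" "max s t = s" using s_ne_t by auto
      have m1: "path_of H (ucomp V H (Min V)) = ys" using uys[OF True] pys by simp
      have m2: "path_of H' (ucomp V H' (Min V)) = xs @ ys" using uD pD True Dxy by simp
      have "valM lact ract (Min V) g m (xs @ ys) = lact (valA g xs) (valM lact ract (Min V) g m ys)"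
        using nx by (rule valM_app2)
      moreover have "map fH (tl L) ! (s - 1) = valA g xs" using s0 Ls fHs tlnth by simp
      moreover have "map fH' (tl (del_nth s L)) = del_nth (s - 1) (map fH (tl L))"
      proof -
        have "map fH' (tl (del_nth s L)) = del_nth (s - 1) (map fH' (tl L))"
          using s0 by (simp add: tl_del_nth del_nth_map)
        also have "\<dots> = del_nth (s - 1) (map fH (tl L))"
          by (rule del_nth_cong) (use fsame tlnth t0 in auto)
        finally show ?thesis .
      qed
      ultimately show ?thesis
        unfolding merge_factors_def m1 m2 using s0 t0 by simp
    next
      case ny: False
      have v0D: "Min V \<in> V - D" using nx ny Dxy v0V by simp
      have s0: "s \<noteq> 0"
      proof
        assume "s = 0" then have "\<mu>s = Min V" using rk_zero_iff[OF finS musS] v0S s_def by simp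
        then show False using mus nx by simp
      qed
      have t0: "t \<noteq> 0"
      proof
        assume "t = 0" then have "\<mu>t = Min V" using rk_zero_iff[OF finS mutS] v0S t_def by simp
        then show False using mut ny by simp
      qed
      have m: "path_of H (ucomp V H (Min V)) = path_of H' (ucomp V H' (Min V))" using pO[OF v0D] .
      have "map fH' (tl (del_nth (max s t) L)) =
          del_nth (max s t - 1) ((map fH (tl L))[min s t - 1 := map fH (tl L) ! (s - 1) * map fH (tl L) ! (t - 1)])"
      proof -
        have "map fH' (tl (del_nth (max s t) L)) = del_nth (max s t - 1) (map fH' (tl L))"
          using s0 t0 by (simp add: tl_del_nth del_nth_map)
        also have "\<dots> = del_nth (max s t - 1) ((map fH (tl L))[min s t - 1 := map fH (tl L) ! (s - 1) * map fH (tl L) ! (t - 1)])"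
        proof (rule del_nth_cong)
          show "length (map fH' (tl L)) = length ((map fH (tl L))[min s t - 1 := map fH (tl L) ! (s - 1) * map fH (tl L) ! (t - 1)])"
            by simp
          fix j assume j: "j < length (map fH' (tl L))" "j \<noteq> max s t - 1"
          show "map fH' (tl L) ! j = (map fH (tl L))[min s t - 1 := map fH (tl L) ! (s - 1) * map fH (tl L) ! (t - 1)] ! j"
          proof (cases "j = min s t - 1")
            case True
            then have "Suc j = min s t" using s0 t0 by simp
            then have "map fH' (tl L) ! j = fH' (min \<mu>s \<mu>t)" using j tlnth Lmin by simp
            moreover have "map fH (tl L) ! (s - 1) = fH \<mu>s" using s0 Ls tlnth by simp
            moreover have "map fH (tl L) ! (t - 1) = fH \<mu>t" using t0 Lt tlnth by simp
            ultimately show ?thesis using True j fmerge by simp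
          next
            case False
            then have "Suc j \<noteq> s" "Suc j \<noteq> t" using j(2) s0 t0 by (auto simp: min_def max_def split: if_splits)
            then show ?thesis using False j fsame tlnth by simp
          qed
        qed
        finally show ?thesis .
      qed
      then show ?thesis unfolding merge_factors_def m using s0 t0 by simp
    qed
  qed
qed

end

lemma chain_map_append:
  "chain_map lact ract V H (es1 @ es2) x = chain_map lact ract V (H \<union> set es1) es2 (chain_map lact ract V H es1 x)"
proof (induction es1 arbitrary: H x)
  case Nil then show ?case by simp
next
  case (Cons e es1)
  have "insert e H \<union> set es1 = H \<union> set (e # es1)" by auto
  then show ?case using Cons.IH[of "insert e H"] by simp
qed

lemma is_chain_Cons:
  assumes "is_chain V E H H' (e # es)"
  shows "covers V E H e" "is_chain V E (insert e H) H' es"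
proof -
  have c: "\<And>i. i < length (e # es) \<Longrightarrow> covers V E (H \<union> set (take i (e # es))) ((e # es) ! i)"
    using assms unfolding is_chain_def by blast
  show ce: "covers V E H e" using c[of 0] by simp
  have "covers V E (insert e H \<union> set (take i es)) (es ! i)" if "i < length es" for i
    using c[of "Suc i"] that by simp
  moreover have "multipath V E (insert e H)" using ce unfolding covers_def by blast
  moreover have "insert e H \<union> set es = H'" using assms unfolding is_chain_def by auto
  ultimately show "is_chain V E (insert e H) H' es" unfolding is_chain_def by blast
qed

lemma is_chain_append:
  assumes a: "is_chain V E H H' es1" and b: "is_chain V E H' H'' es2"
  shows "is_chain V E H H'' (es1 @ es2)"
proof -
  have "covers V E (H \<union> set (take i (es1 @ es2))) ((es1 @ es2) ! i)" if i: "i < length (es1 @ es2)" for i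
  proof (cases "i < length es1")
    case True
    then show ?thesis using a unfolding is_chain_def by (simp add: nth_append)
  next
    case False
    then have k: "i - length es1 < length es2" using i by simp
    have "H \<union> set (take i (es1 @ es2)) = H' \<union> set (take (i - length es1) es2)"
      using False a unfolding is_chain_def by auto
    moreover have "(es1 @ es2) ! i = es2 ! (i - length es1)" using False by (simp add: nth_append)
    ultimately show ?thesis using b k unfolding is_chain_def by simp
  qed
  moreover have "H \<union> set (es1 @ es2) = H''" using a b unfolding is_chain_def by auto
  ultimately show ?thesis using a unfolding is_chain_def by blast
qed

context bim
begin

lemma chain_inv:
  assumes fin: "finite V" and EV: "E \<subseteq> V \<times> V"
  shows "is_chain V E H H' es \<Longrightarrow> chain_map lact ract V H es (Tn lact ract V H g m) = Tn lact ract V H' g m"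
proof (induction es arbitrary: H)
  case Nil then show ?case unfolding is_chain_def by simp
next
  case (Cons e es)
  note c = is_chain_Cons[OF Cons.prems]
  show ?case using step[OF fin EV c(1)] Cons.IH[OF c(2)] by simp
qed

lemma Tn_pure:
  assumes "finite V" "V \<noteq> {}"
  shows "Tn lact ract V H g m \<in> pure_tensors V H"
proof -
  have "Min V \<in> V" using assms by simp
  then have "comps V H \<noteq> {}" unfolding comps_def by blast
  then have "card (comps V H) \<ge> 1" using finite_comps[OF assms(1)] by (simp add: Suc_leI card_gt_0_iff)
  then show ?thesis unfolding Tn_def pure_tensors_def Lst_def
    using card_Ms[OF assms(1)] Ms_finite[OF assms(1)] by simp
qed

lemma represent:
  assumes fin: "finite V" and M: "multipath V E H" and x: "x \<in> pure_tensors V H"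
  shows "\<exists>g. Tn lact ract V H g (fst x) = x"
proof -
  obtain m as where xm: "x = (m, as)" by (cases x)
  have len: "Suc (length as) = card (comps V H)" using x xm unfolding pure_tensors_def by simp
  then have "comps V H \<noteq> {}" by auto
  then have Vne: "V \<noteq> {}" unfolding comps_def by blast
  define S where "S = Ms V H"
  have finS: "finite S" unfolding S_def using fin by (rule Ms_finite)
  have v0S: "Min V \<in> S" "Min S = Min V" unfolding S_def using MinV_Ms[OF fin Vne] by auto
  have v0V: "Min V \<in> V" using fin Vne by simp
  define g where "g = (\<lambda>v. if Min V \<notin> ucomp V H v \<and> v = hd (path_of H (ucomp V H v))
      then as ! (rk S (Min (ucomp V H v)) - 1) else 1)"
  define C0 where "C0 = ucomp V H (Min V)"
  have C0c: "C0 \<in> comps V H" unfolding C0_def using v0V by (rule ucomp_in_comps)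
  have p0: "ispath H C0 (path_of H C0)" using multipath_path[OF M C0c] .
  have m1: "valM lact ract (Min V) g m (path_of H C0) = m"
  proof (rule valM_ones)
    fix v assume "v \<in> set (path_of H C0)"
    then have "v \<in> C0" using p0 unfolding ispath_def by simp
    then have "ucomp V H v = C0" using comps_ucomp[OF C0c] by simp
    then have "Min V \<in> ucomp V H v" unfolding C0_def using ucomp_self[OF v0V] by simp
    then show "g v = 1" unfolding g_def by simp
  qed
  define L where "L = sorted_list_of_set S"
  have lenL: "length L = card S" unfolding L_def by simp
  have cS: "card S = card (comps V H)" unfolding S_def using card_Ms[OF fin] .
  have m2: "map (\<lambda>\<mu>. valA g (path_of H (ucomp V H \<mu>))) (tl L) = as"
  proof (rule nth_equalityI)
    show "length (map (\<lambda>\<mu>. valA g (path_of H (ucomp V H \<mu>))) (tl L)) = length as"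
      using len lenL cS by simp
    fix j assume "j < length (map (\<lambda>\<mu>. valA g (path_of H (ucomp V H \<mu>))) (tl L))"
    then have j: "Suc j < card S" using lenL by simp
    define \<mu> where "\<mu> = L ! Suc j"
    have muS: "\<mu> \<in> S" unfolding \<mu>_def L_def using j finS by (metis nth_mem set_sorted_list_of_set length_sorted_list_of_set)
    have rkmu: "rk S \<mu> = Suc j" unfolding \<mu>_def L_def using rk_nth[OF finS j] .
    have me: "\<mu> \<in> V" "ucomp V H \<mu> \<in> comps V H" "Min (ucomp V H \<mu>) = \<mu>"
      using Ms_elem[OF fin] muS unfolding S_def by auto
    define C where "C = ucomp V H \<mu>"
    have nv0: "Min V \<notin> C"
    proof
      assume "Min V \<in> C"
      then have "\<mu> = Min V" using MinV_in_comp[OF fin me(2)] me(3) C_def by simp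
      then have "rk S \<mu> = 0" using rk_zero_iff[OF finS muS] v0S by simp
      then show False using rkmu by simp
    qed
    have pC: "ispath H C (path_of H C)" using multipath_path[OF M] me(2) C_def by simp
    have Cne: "C \<noteq> {}" using comps_ne me(2) C_def by simp
    then obtain a p' where ap: "path_of H C = a # p'" using pC unfolding ispath_def by (cases "path_of H C") auto
    have aC: "a \<in> C" using pC ap unfolding ispath_def by auto
    have ua: "ucomp V H a = C" using comps_ucomp[OF me(2)] aC C_def by simp
    have ga: "g a = as ! j" unfolding g_def using ua nv0 ap rkmu me(3) C_def by simp
    have gp: "g v = 1" if v: "v \<in> set p'" for v
    proof -
      have "v \<in> C" using pC ap v unfolding ispath_def by auto
      then have uv: "ucomp V H v = C" using comps_ucomp[OF me(2)] C_def by simp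
      have "v \<noteq> a" using pC ap v unfolding ispath_def by auto
      then show ?thesis unfolding g_def uv ap by simp
    qed
    have "valA g p' = 1" using gp by (rule valA_ones)
    then have "valA g (path_of H C) = as ! j" unfolding ap using ga by (simp add: valA_def)
    then show "map (\<lambda>\<mu>. valA g (path_of H (ucomp V H \<mu>))) (tl L) ! j = as ! j"
    proof -
      have tj: "tl L ! j = \<mu>" using j lenL \<mu>_def by (simp add: nth_tl)
      have "j < length (tl L)" using j lenL by simp
      then have "map (\<lambda>\<mu>. valA g (path_of H (ucomp V H \<mu>))) (tl L) ! j = valA g (path_of H (ucomp V H (tl L ! j)))"
        by (rule nth_map)
      also have "\<dots> = valA g (path_of H C)" unfolding tj C_def ..
      finally show ?thesis using \<open>valA g (path_of H C) = as ! j\<close> by simp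
    qed
  qed
  have "Tn lact ract V H g m = x" unfolding Tn_def Lst_def xm using m1 m2 C0_def L_def S_def by simp
  then show ?thesis using xm by auto
qed

end

theorem proposition4p8:
  fixes V :: "'v::linorder set" and E :: "('v \<times> 'v) set"
    and sA :: "'r::comm_ring_1 \<Rightarrow> 'a::ring_1 \<Rightarrow> 'a" and sM :: "'r \<Rightarrow> 'm::ab_group_add \<Rightarrow> 'm"
    and lact :: "'a \<Rightarrow> 'm \<Rightarrow> 'm" and ract :: "'m \<Rightarrow> 'a \<Rightarrow> 'm"
  assumes "digraph V E"
    and "RA_bimodule sA sM lact ract"
  shows
    \<comment> \<open>every morphism H \<le> H' of P(G) is realized by a chain of coverings\<close>
    "(\<forall>H H'. multipath V E H \<and> multipath V E H' \<and> H \<subseteq> H' \<longrightarrow> (\<exists>es. is_chain V E H H' es))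
     \<comment> \<open>the composite maps F(H) into F(H')\<close>
     \<and> (\<forall>H H' es x. is_chain V E H H' es \<and> x \<in> pure_tensors V H \<longrightarrow>
          chain_map lact ract V H es x \<in> pure_tensors V H')
     \<comment> \<open>well-definedness: independent of the chain\<close>
     \<and> (\<forall>H H' es1 es2 x. is_chain V E H H' es1 \<and> is_chain V E H H' es2 \<and> x \<in> pure_tensors V H \<longrightarrow>
          chain_map lact ract V H es1 x = chain_map lact ract V H es2 x)
     \<comment> \<open>functoriality: identities and composition\<close>
     \<and> (\<forall>H x. multipath V E H \<and> x \<in> pure_tensors V H \<longrightarrow> F_mor lact ract V E H H x = x)
     \<and> (\<forall>H H' H'' x. multipath V E H \<and> multipath V E H' \<and> multipath V E H'' \<and> H \<subseteq> H' \<and> H' \<subseteq> H''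
          \<and> x \<in> pure_tensors V H \<longrightarrow>
          F_mor lact ract V E H' H'' (F_mor lact ract V E H H' x) = F_mor lact ract V E H H'' x)"
proof -
  have fin: "finite V" and EV: "E \<subseteq> V \<times> V" using assms(1) unfolding digraph_def by auto
  interpret bim lact ract
    using assms(2) unfolding RA_bimodule_def by unfold_locales auto
  have c1: "\<forall>H H'. multipath V E H \<and> multipath V E H' \<and> H \<subseteq> H' \<longrightarrow> (\<exists>es. is_chain V E H H' es)"
    using chain_exists[OF fin EV] by blast
  have Vne: "V \<noteq> {}" if "x \<in> pure_tensors V H" for x and H :: "('v \<times> 'v) set"
  proof -
    have "card (comps V H) \<noteq> 0" using that unfolding pure_tensors_def by auto
    then have "comps V H \<noteq> {}" by auto
    then show ?thesis unfolding comps_def by blast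
  qed
  have key: "chain_map lact ract V H es x = Tn lact ract V H' g (fst x)"
    if "is_chain V E H H' es" "Tn lact ract V H g (fst x) = x" for H H' es x g
    using chain_inv[OF fin EV that(1), of g "fst x"] that(2) by simp
  have c2: "\<forall>H H' es x. is_chain V E H H' es \<and> x \<in> pure_tensors V H \<longrightarrow>
          chain_map lact ract V H es x \<in> pure_tensors V H'"
  proof (intro allI impI)
    fix H H' es and x :: "'m \<times> 'a list" assume a: "is_chain V E H H' es \<and> x \<in> pure_tensors V H"
    then have M: "multipath V E H" unfolding is_chain_def by blast
    obtain g where g: "Tn lact ract V H g (fst x) = x" using represent[OF fin M] a by blast
    show "chain_map lact ract V H es x \<in> pure_tensors V H'"
      using key[OF _ g] a Tn_pure[OF fin Vne] by metis
  qed
  have c3: "\<forall>H H' es1 es2 x. is_chain V E H H' es1 \<and> is_chain V E H H' es2 \<and> x \<in> pure_tensors V H \<longrightarrow>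
          chain_map lact ract V H es1 x = chain_map lact ract V H es2 x"
  proof (intro allI impI)
    fix H H' es1 es2 and x :: "'m \<times> 'a list" assume a: "is_chain V E H H' es1 \<and> is_chain V E H H' es2 \<and> x \<in> pure_tensors V H"
    then have M: "multipath V E H" unfolding is_chain_def by blast
    obtain g where g: "Tn lact ract V H g (fst x) = x" using represent[OF fin M] a by blast
    show "chain_map lact ract V H es1 x = chain_map lact ract V H es2 x"
      using key[OF _ g] a by metis
  qed
  have c4: "\<forall>H x. multipath V E H \<and> x \<in> pure_tensors V H \<longrightarrow> F_mor lact ract V E H H x = x"
  proof (intro allI impI)
    fix H and x :: "'m \<times> 'a list" assume a: "multipath V E H \<and> x \<in> pure_tensors V H"
    have ch0: "is_chain V E H H []" using a unfolding is_chain_def by simp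
    then have ch: "is_chain V E H H (SOME es. is_chain V E H H es)" by (rule someI)
    have "chain_map lact ract V H (SOME es. is_chain V E H H es) x = chain_map lact ract V H [] x"
      using c3 ch ch0 a by blast
    then show "F_mor lact ract V E H H x = x" unfolding F_mor_def by simp
  qed
  have c5: "\<forall>H H' H'' x. multipath V E H \<and> multipath V E H' \<and> multipath V E H'' \<and> H \<subseteq> H' \<and> H' \<subseteq> H''
          \<and> x \<in> pure_tensors V H \<longrightarrow>
          F_mor lact ract V E H' H'' (F_mor lact ract V E H H' x) = F_mor lact ract V E H H'' x"
  proof (intro allI impI)
    fix H H' H'' and x :: "'m \<times> 'a list" assume a: "multipath V E H \<and> multipath V E H' \<and> multipath V E H'' \<and> H \<subseteq> H' \<and> H' \<subseteq> H''
          \<and> x \<in> pure_tensors V H"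
    define es1 where "es1 = (SOME es. is_chain V E H H' es)"
    define es2 where "es2 = (SOME es. is_chain V E H' H'' es)"
    define es3 where "es3 = (SOME es. is_chain V E H H'' es)"
    have ch1: "is_chain V E H H' es1" unfolding es1_def using c1 a by (metis someI)
    have ch2: "is_chain V E H' H'' es2" unfolding es2_def using c1 a by (metis someI)
    have ch3: "is_chain V E H H'' es3" unfolding es3_def using c1 a by (metis someI order_trans)
    have ch12: "is_chain V E H H'' (es1 @ es2)" using ch1 ch2 by (rule is_chain_append)
    have u: "H \<union> set es1 = H'" using ch1 unfolding is_chain_def by blast
    have "F_mor lact ract V E H' H'' (F_mor lact ract V E H H' x)
        = chain_map lact ract V H' es2 (chain_map lact ract V H es1 x)"
      unfolding F_mor_def es1_def es2_def ..
    also have "\<dots> = chain_map lact ract V H (es1 @ es2) x" using chain_map_append u by metis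
    also have "\<dots> = chain_map lact ract V H es3 x" using c3 ch12 ch3 a by blast
    also have "\<dots> = F_mor lact ract V E H H'' x" unfolding F_mor_def es3_def ..
    finally show "F_mor lact ract V E H' H'' (F_mor lact ract V E H H' x) = F_mor lact ract V E H H'' x" .
  qed
  show ?thesis using c1 c2 c3 c4 c5 by blast
qed

end
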